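(* Let $E$ be a finite set and $V \subset \mathbb R^E$ a linear subspace with oriented matroid $M$. Let $\sim$ be the equivalence relation on triples $(F,G,T)$ ($T$ a tope of $M$, $F\subset G$ flats relatively acyclic in $T$) given by $(F,G,T)\sim(F',G',T')$ iff $(F,G)=(F',G')$ and $\pi_{G\setminus F}(T)=\pi_{G\setminus F}(T')$. Then the equivalence classes of $\sim$ are in bijection with the cells $Y_{FGT}^\circ$, where $F\subset G$ range over flats of $M$ and $T$ over topes of $(M/F)|_G$. If $[S,I,J]$ is the equivalence class (of the triple $(I,J,S)$) corresponding to $Y_{FGT}^\circ$, then $Y_{FGT}^\circ = {}_S\mathcal Y_{IJ}^\circ$. Explicitly, $Y_{FGT}^\circ = {}_S\mathcal Y_{IJ}^\circ$ if and only if $(F,G) = (I,J)$ and $\pi_{G\setminus F}(S) = \pi_{G\setminus F}(T)$.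
   Context: $\mathbb P^1_{\mathbb R}=\mathbb R\cup\{\infty\}$. The sign map $s:\mathbb R^E\to\{-,0,+\}^E$ records signs of coordinates; the covectors of $M$ are $\{s(v):v\in V\}$; for a signed set $X$, $X^-,X^0,X^+$ are coordinates with value $-,0,+$; $X\le Y$ means $X^+\subset Y^+$, $X^-\subset Y^-$; topes are maximal covectors; flats are the sets $X^0$. A flat is relatively acyclic in a tope $T$ if it equals $X^0$ for a covector $X\le T$. $\pi_A$ denotes restriction to coordinates in $A$. For a flat $F$, $M/F$ is the oriented matroid on $E$ whose covectors are the covectors $X$ of $M$ with $F\subset X^0$; for a flat $G\supset F$, $(M/F)|_G$ has covectors $\pi_G(X)$ for $X$ covectors of $M/F$; its topes are signed sets on $G$ with zero set $F$. $Y_V$ is the Zariski closure of $V$ in $(\mathbb P^1_{\mathbb R})^E$, and for such $F\subset G$, $T$: $Y_{FGT}^\circ := Y_V\cap(0^F\times\mathbb R_{>0}^{T^+}\times\mathbb R_{<0}^{T^-}\times\infty^{E\setminus G})$. ${}_S\mathcal Y_V$ is the analytic closure of $s^{-1}(S)\cap V$ in $(\mathbb P^1_{\mathbb R})^E$, and ${}_S\mathcal Y_{IJ}^\circ := {}_S\mathcal Y_V \cap (0^I\times\mathbb R_{>0}^{(J\setminus I)\cap S^+}\times\mathbb R_{<0}^{(J\setminus I)\cap S^-}\times\infty^{E\setminus J})$. *)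

theory Defs
  imports "HOL-Analysis.Analysis"
begin

datatype p1 = Fin real | Infty

instantiation p1 :: topological_space
begin

definition open_p1 :: "p1 set \<Rightarrow> bool" where
  "open_p1 S \<longleftrightarrow> open (Fin -` S) \<and>
     (Infty \<in> S \<longrightarrow> (\<exists>R. \<forall>x::real. R < \<bar>x\<bar> \<longrightarrow> Fin x \<in> S))"

instance
proof
  show "open (UNIV :: p1 set)" by (simp add: open_p1_def)
next
  fix S T :: "p1 set"
  assume S: "open S" and T: "open T"
  show "open (S \<inter> T)"
    unfolding open_p1_def
  proof
    show "open (Fin -` (S \<inter> T))"
      using S T by (simp add: open_p1_def vimage_Int open_Int)
    show "Infty \<in> S \<inter> T \<longrightarrow> (\<exists>R. \<forall>x. R < \<bar>x\<bar> \<longrightarrow> Fin x \<in> S \<inter> T)"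
    proof
      assume "Infty \<in> S \<inter> T"
      then obtain R1 R2 where "\<forall>x. R1 < \<bar>x\<bar> \<longrightarrow> Fin x \<in> S" "\<forall>x. R2 < \<bar>x\<bar> \<longrightarrow> Fin x \<in> T"
        using S T by (auto simp: open_p1_def)
      then show "\<exists>R. \<forall>x. R < \<bar>x\<bar> \<longrightarrow> Fin x \<in> S \<inter> T"
        by (intro exI[of _ "max R1 R2"]) auto
    qed
  qed
next
  fix K :: "p1 set set"
  assume K: "\<forall>S\<in>K. open S"
  show "open (\<Union>K)"
    unfolding open_p1_def
  proof
    have "Fin -` \<Union>K = (\<Union>S\<in>K. Fin -` S)" by auto
    then show "open (Fin -` \<Union>K)" using K by (auto simp: open_p1_def)
    show "Infty \<in> \<Union>K \<longrightarrow> (\<exists>R. \<forall>x. R < \<bar>x\<bar> \<longrightarrow> Fin x \<in> \<Union>K)"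
    proof
      assume "Infty \<in> \<Union>K"
      then obtain S where S: "S \<in> K" "Infty \<in> S" by blast
      then obtain R where "\<forall>x. R < \<bar>x\<bar> \<longrightarrow> Fin x \<in> S"
        using K unfolding open_p1_def by blast
      then show "\<exists>R. \<forall>x. R < \<bar>x\<bar> \<longrightarrow> Fin x \<in> \<Union>K"
        using S by blast
    qed
  qed
qed

end

fun hom :: "p1 \<Rightarrow> real \<times> real" where
  "hom (Fin r) = (r, 1)"
| "hom Infty = (1, 0)"

inductive_set polyfun :: "(('e \<Rightarrow> real \<times> real) \<Rightarrow> real) set" where
  const: "(\<lambda>_. c) \<in> polyfun"
| xcoord: "(\<lambda>z. fst (z e)) \<in> polyfun"
| ycoord: "(\<lambda>z. snd (z e)) \<in> polyfun"
| add: "f \<in> polyfun \<Longrightarrow> g \<in> polyfun \<Longrightarrow> (\<lambda>z. f z + g z) \<in> polyfun"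
| mult: "f \<in> polyfun \<Longrightarrow> g \<in> polyfun \<Longrightarrow> (\<lambda>z. f z * g z) \<in> polyfun"

definition multihom :: "(('e \<Rightarrow> real \<times> real) \<Rightarrow> real) \<Rightarrow> bool" where
  "multihom f \<longleftrightarrow> f \<in> polyfun \<and>
     (\<exists>d :: 'e \<Rightarrow> nat. \<forall>z lam. (\<forall>e. lam e \<noteq> 0) \<longrightarrow>
        f (\<lambda>e. (lam e * fst (z e), lam e * snd (z e))) = (\<Prod>e\<in>UNIV. lam e ^ d e) * f z)"

definition zariski_closed :: "('e \<Rightarrow> p1) set \<Rightarrow> bool" where
  "zariski_closed Z \<longleftrightarrow> (\<exists>P. (\<forall>f\<in>P. multihom f) \<and>
      Z = {p. \<forall>f\<in>P. f (\<lambda>e. hom (p e)) = 0})"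

definition zariski_closure :: "('e \<Rightarrow> p1) set \<Rightarrow> ('e \<Rightarrow> p1) set" where
  "zariski_closure A = \<Inter>{Z. zariski_closed Z \<and> A \<subseteq> Z}"

definition emb :: "('e \<Rightarrow> real) \<Rightarrow> ('e \<Rightarrow> p1)" where
  "emb v = (\<lambda>e. Fin (v e))"

definition lin_subspace :: "('e \<Rightarrow> real) set \<Rightarrow> bool" where
  "lin_subspace V \<longleftrightarrow> (\<lambda>_. 0) \<in> V \<and> (\<forall>v\<in>V. \<forall>w\<in>V. (\<lambda>e. v e + w e) \<in> V)
      \<and> (\<forall>c::real. \<forall>v\<in>V. (\<lambda>e. c * v e) \<in> V)"

datatype sgn = Neg | Zer | Pos

definition sign_of :: "real \<Rightarrow> sgn" where
  "sign_of x = (if x > 0 then Pos else if x < 0 then Neg else Zer)"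

definition signmap :: "('e \<Rightarrow> real) \<Rightarrow> ('e \<Rightarrow> sgn)" where
  "signmap v = (\<lambda>e. sign_of (v e))"

definition pos :: "('e \<Rightarrow> sgn) \<Rightarrow> 'e set" where "pos X = {e. X e = Pos}"
definition neg :: "('e \<Rightarrow> sgn) \<Rightarrow> 'e set" where "neg X = {e. X e = Neg}"
definition zer :: "('e \<Rightarrow> sgn) \<Rightarrow> 'e set" where "zer X = {e. X e = Zer}"

definition sle :: "('e \<Rightarrow> sgn) \<Rightarrow> ('e \<Rightarrow> sgn) \<Rightarrow> bool" where
  "sle X Y \<longleftrightarrow> pos X \<subseteq> pos Y \<and> neg X \<subseteq> neg Y"

definition covectors :: "('e \<Rightarrow> real) set \<Rightarrow> ('e \<Rightarrow> sgn) set" where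
  "covectors V = signmap ` V"

definition topes :: "('e \<Rightarrow> real) set \<Rightarrow> ('e \<Rightarrow> sgn) set" where
  "topes V = {T \<in> covectors V. \<forall>Y\<in>covectors V. sle T Y \<longrightarrow> Y = T}"

definition flats :: "('e \<Rightarrow> real) set \<Rightarrow> 'e set set" where
  "flats V = zer ` covectors V"

definition rel_acyclic :: "('e \<Rightarrow> real) set \<Rightarrow> 'e set \<Rightarrow> ('e \<Rightarrow> sgn) \<Rightarrow> bool" where
  "rel_acyclic V F T \<longleftrightarrow> (\<exists>X\<in>covectors V. sle X T \<and> zer X = F)"

text \<open>Restriction pi_A; a signed set on A is represented by its extension by Zer outside A.\<close>
definition restr :: "'e set \<Rightarrow> ('e \<Rightarrow> sgn) \<Rightarrow> ('e \<Rightarrow> sgn)" where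
  "restr A X = (\<lambda>e. if e \<in> A then X e else Zer)"

text \<open>Covectors and topes of (M/F)|_G (signed sets on G).\<close>
definition minor_covectors :: "('e \<Rightarrow> real) set \<Rightarrow> 'e set \<Rightarrow> 'e set \<Rightarrow> ('e \<Rightarrow> sgn) set" where
  "minor_covectors V F G = {restr G X | X. X \<in> covectors V \<and> F \<subseteq> zer X}"

definition minor_topes :: "('e \<Rightarrow> real) set \<Rightarrow> 'e set \<Rightarrow> 'e set \<Rightarrow> ('e \<Rightarrow> sgn) set" where
  "minor_topes V F G = {T \<in> minor_covectors V F G.
      \<forall>Y\<in>minor_covectors V F G. sle T Y \<longrightarrow> Y = T}"

definition YV :: "('e \<Rightarrow> real) set \<Rightarrow> ('e \<Rightarrow> p1) set" where
  "YV V = zariski_closure (emb ` V)"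

definition cellY :: "('e \<Rightarrow> real) set \<Rightarrow> 'e set \<Rightarrow> 'e set \<Rightarrow> ('e \<Rightarrow> sgn) \<Rightarrow> ('e \<Rightarrow> p1) set" where
  "cellY V F G T = YV V \<inter> {p. (\<forall>e\<in>F. p e = Fin 0)
      \<and> (\<forall>e\<in>pos T. \<exists>x>0. p e = Fin x) \<and> (\<forall>e\<in>neg T. \<exists>x<0. p e = Fin x)
      \<and> (\<forall>e. e \<notin> G \<longrightarrow> p e = Infty)}"

definition SY :: "('e \<Rightarrow> real) set \<Rightarrow> ('e \<Rightarrow> sgn) \<Rightarrow> ('e \<Rightarrow> p1) set" where
  "SY V S = closure (emb ` (V \<inter> signmap -` {S}))"

definition cellSY :: "('e \<Rightarrow> real) set \<Rightarrow> ('e \<Rightarrow> sgn) \<Rightarrow> 'e set \<Rightarrow> 'e set \<Rightarrow> ('e \<Rightarrow> p1) set" where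
  "cellSY V S I J = SY V S \<inter> {p. (\<forall>e\<in>I. p e = Fin 0)
      \<and> (\<forall>e\<in>(J - I) \<inter> pos S. \<exists>x>0. p e = Fin x)
      \<and> (\<forall>e\<in>(J - I) \<inter> neg S. \<exists>x<0. p e = Fin x)
      \<and> (\<forall>e. e \<notin> J \<longrightarrow> p e = Infty)}"

definition triples :: "('e \<Rightarrow> real) set \<Rightarrow> ('e set \<times> 'e set \<times> ('e \<Rightarrow> sgn)) set" where
  "triples V = {(F, G, T). T \<in> topes V \<and> F \<in> flats V \<and> G \<in> flats V \<and> F \<subseteq> G
      \<and> rel_acyclic V F T \<and> rel_acyclic V G T}"

definition sim :: "('e \<Rightarrow> real) set \<Rightarrow>
    (('e set \<times> 'e set \<times> ('e \<Rightarrow> sgn)) \<times> ('e set \<times> 'e set \<times> ('e \<Rightarrow> sgn))) set" where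
  "sim V = {((F, G, T), (F', G', T')). (F, G, T) \<in> triples V \<and> (F', G', T') \<in> triples V
      \<and> F = F' \<and> G = G' \<and> restr (G - F) T = restr (G - F) T'}"

definition cell_index :: "('e \<Rightarrow> real) set \<Rightarrow> ('e set \<times> 'e set \<times> ('e \<Rightarrow> sgn)) set" where
  "cell_index V = {(F, G, T). F \<in> flats V \<and> G \<in> flats V \<and> F \<subseteq> G \<and> T \<in> minor_topes V F G}"

end

theory Submission
  imports Defs
begin

fun ichart :: "p1 \<Rightarrow> real \<times> real" where
  "ichart Infty = (1, 0)"
| "ichart (Fin x) = (1, inverse x)"

definition Ninf :: "p1 set" where "Ninf = insert Infty (Fin ` {x. 1 < \<bar>x\<bar>})"

lemma open_range_Fin: "open (range Fin)"
proof -
  have "Fin -` range Fin = UNIV" by auto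
  then show ?thesis by (simp add: open_p1_def)
qed

lemma open_Ninf: "open Ninf"
proof -
  have "Fin -` Ninf = {x. 1 < \<bar>x\<bar>}" by (auto simp: Ninf_def)
  moreover have "open {x::real. 1 < \<bar>x\<bar>}"
    by (intro open_Collect_less continuous_intros)
  ultimately show ?thesis unfolding open_p1_def by (auto simp: Ninf_def)
qed

lemma cont_hom: "continuous_on (range Fin) hom"
  unfolding continuous_on_topological
proof (intro ballI allI impI)
  fix x B assume x: "x \<in> range Fin" and B: "open B" "hom x \<in> B"
  let ?W = "(\<lambda>y::real. (y, 1::real)) -` B"
  have oW: "open ?W" by (intro continuous_open_vimage B continuous_intros)
  have "Fin -` (Fin ` ?W) = ?W" by auto
  then have "open (Fin ` ?W)" using oW unfolding open_p1_def by auto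
  moreover have "x \<in> Fin ` ?W" using x B by auto
  moreover have "\<forall>y\<in>range Fin. y \<in> Fin ` ?W \<longrightarrow> hom y \<in> B" by auto
  ultimately show "\<exists>A. open A \<and> x \<in> A \<and> (\<forall>y\<in>range Fin. y \<in> A \<longrightarrow> hom y \<in> B)" by blast
qed

lemma cont_ichart: "continuous_on Ninf ichart"
  unfolding continuous_on_topological
proof (intro ballI allI impI)
  fix x B assume x: "x \<in> Ninf" and B: "open B" "ichart x \<in> B"
  show "\<exists>A. open A \<and> x \<in> A \<and> (\<forall>y\<in>Ninf. y \<in> A \<longrightarrow> ichart y \<in> B)"
  proof (cases x)
    case Infty
    then have "(1,0) \<in> B" using B by simp
    then obtain r where r: "r > 0" "ball (1,0) r \<subseteq> B" using B open_contains_ball by blast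
    define R where "R = max 1 (1/r)"
    define A where "A = insert Infty (Fin ` {x. R < \<bar>x\<bar>})"
    have "Fin -` A = {x. R < \<bar>x\<bar>}" by (auto simp: A_def)
    moreover have "open {x::real. R < \<bar>x\<bar>}"
      by (intro open_Collect_less continuous_intros)
    ultimately have "open A" unfolding open_p1_def by (auto simp: A_def)
    moreover have "x \<in> A" using Infty by (simp add: A_def)
    moreover have "ichart y \<in> B" if "y \<in> A" for y
    proof (cases y)
      case (Fin z)
      then have z: "R < \<bar>z\<bar>" using that by (auto simp: A_def)
      then have "1/r < \<bar>z\<bar>" "z \<noteq> 0" by (auto simp: R_def)
      then have "1 < \<bar>z\<bar> * r" using r(1) by (simp add: field_simps)
      then have "1 / \<bar>z\<bar> < r" using \<open>z \<noteq> 0\<close> by (simp add: field_simps)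
      then have "\<bar>inverse z\<bar> < r" by (simp add: abs_inverse divide_inverse)
      have "dist (1::real, 0::real) (1, inverse z) = \<bar>inverse z\<bar>"
        by (simp add: dist_Pair_Pair dist_real_def)
      then have "(1::real, inverse z) \<in> ball (1, 0) r" using \<open>\<bar>inverse z\<bar> < r\<close> by (simp only: mem_ball)
      then show ?thesis using r(2) Fin by auto
    next
      case Infty then show ?thesis using \<open>(1,0) \<in> B\<close> by simp
    qed
    ultimately show ?thesis by blast
  next
    case (Fin z)
    then have z: "1 < \<bar>z\<bar>" using x by (auto simp: Ninf_def)
    let ?W = "(\<lambda>y. (1::real, inverse y)) -` B \<inter> {x::real. 1 < \<bar>x\<bar>}"
    have c1: "continuous_on {x::real. 1 < \<bar>x\<bar>} (\<lambda>y. (1::real, inverse y))"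
      by (intro continuous_intros) auto
    have o1: "open {x::real. 1 < \<bar>x\<bar>}"
      by (intro open_Collect_less continuous_intros)
    have oW: "open ?W" by (rule continuous_on_open_vimage[OF o1, THEN iffD1, OF c1, rule_format, OF B(1)])
    have "Fin -` (Fin ` ?W) = ?W" by auto
    then have "open (Fin ` ?W)" using oW unfolding open_p1_def by auto
    moreover have "x \<in> Fin ` ?W" using Fin z B by auto
    moreover have "\<forall>y\<in>Ninf. y \<in> Fin ` ?W \<longrightarrow> ichart y \<in> B" by auto
    ultimately show ?thesis by blast
  qed
qed

lemma polyfun_cont: "f \<in> polyfun \<Longrightarrow> continuous_on UNIV f"
proof (induction rule: polyfun.induct)
  case (xcoord e) show ?case
    by (intro continuous_on_fst continuous_on_product_coordinates)
next
  case (ycoord e) show ?case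
    by (intro continuous_on_snd continuous_on_product_coordinates)
next
  case (const c) show ?case by (rule continuous_on_const)
next
  case (add f g) from add.IH show ?case by (rule continuous_on_add)
next
  case (mult f g) from mult.IH show ?case by (rule continuous_on_mult)
qed

definition cp :: "('e \<Rightarrow> p1) \<Rightarrow> ('e \<Rightarrow> p1) \<Rightarrow> ('e \<Rightarrow> real \<times> real)" where
  "cp p q = (\<lambda>e. if p e = Infty then ichart (q e) else hom (q e))"

definition Np :: "('e \<Rightarrow> p1) \<Rightarrow> ('e \<Rightarrow> p1) set" where
  "Np p = {q. \<forall>e\<in>UNIV. q e \<in> (if p e = Infty then Ninf else range Fin)}"

lemma open_Np: "open (Np (p :: 'e::finite \<Rightarrow> p1))"
  unfolding Np_def
  by (rule product_topology_basis'[where x="\<lambda>i. i", simplified]) (auto simp: open_Ninf open_range_Fin)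

lemma cont_cp: "continuous_on (Np p) (cp p)"
  unfolding cp_def
proof (intro continuous_on_coordinatewise_then_product)
  fix e
  show "continuous_on (Np p) (\<lambda>q. if p e = Infty then ichart (q e) else hom (q e))"
  proof (cases "p e = Infty")
    case True
    have "continuous_on (Np p) (\<lambda>q. ichart (q e))"
      by (rule continuous_on_compose2[OF cont_ichart continuous_on_product_coordinates[THEN continuous_on_subset]])
        (use True in \<open>auto simp: Np_def\<close>)
    then show ?thesis using True by simp
  next
    case False
    have "continuous_on (Np p) (\<lambda>q. hom (q e))"
      by (rule continuous_on_compose2[OF cont_hom continuous_on_product_coordinates[THEN continuous_on_subset]])
        (use False in \<open>auto simp: Np_def\<close>)
    then show ?thesis using False by simp
  qed
qed

lemma cp_self: "cp p p = (\<lambda>e. hom (p e))"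
  by (auto simp: cp_def fun_eq_iff)

lemma self_Np: "p \<in> Np p"
  unfolding Np_def
proof (intro CollectI ballI)
  fix e show "p e \<in> (if p e = Infty then Ninf else range Fin)"
    by (cases "p e") (auto simp: Ninf_def)
qed

lemma hom_cp:
  assumes "q \<in> Np p"
  defines "lam \<equiv> \<lambda>e. if p e = Infty then (case q e of Fin x \<Rightarrow> x | Infty \<Rightarrow> 1) else 1"
  shows "(\<lambda>e. hom (q e)) = (\<lambda>e. (lam e * fst (cp p q e), lam e * snd (cp p q e)))"
    and "\<forall>e. lam e \<noteq> 0"
proof -
  show "(\<lambda>e. hom (q e)) = (\<lambda>e. (lam e * fst (cp p q e), lam e * snd (cp p q e)))"
  proof
    fix e show "hom (q e) = (lam e * fst (cp p q e), lam e * snd (cp p q e))"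
    proof -
      have qe: "q e \<in> (if p e = Infty then Ninf else range Fin)" using assms(1) by (auto simp: Np_def)
      show ?thesis using qe by (cases "q e") (auto simp: lam_def cp_def Ninf_def)
    qed
  qed
  show "\<forall>e. lam e \<noteq> 0"
  proof
    fix e show "lam e \<noteq> 0"
    proof -
      have qe: "q e \<in> (if p e = Infty then Ninf else range Fin)" using assms(1) by (auto simp: Np_def)
      show ?thesis using qe by (cases "q e") (auto simp: lam_def Ninf_def)
    qed
  qed
qed

lemma multihom_closed:
  assumes "multihom (f :: ('e::finite \<Rightarrow> real \<times> real) \<Rightarrow> real)"
  shows "closed {p. f (\<lambda>e. hom (p e)) = 0}"
proof -
  obtain d where d: "\<forall>z lam. (\<forall>e. lam e \<noteq> 0) \<longrightarrow>
        f (\<lambda>e. (lam e * fst (z e), lam e * snd (z e))) = (\<Prod>e\<in>UNIV. lam e ^ d e) * f z"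
    and fp: "f \<in> polyfun" using assms unfolding multihom_def by blast
  have "open {p. f (\<lambda>e. hom (p e)) \<noteq> 0}"
  proof (subst open_subopen, intro ballI)
    fix p0 assume p0: "p0 \<in> {p. f (\<lambda>e. hom (p e)) \<noteq> 0}"
    have cc: "continuous_on (Np p0) (f \<circ> cp p0)"
      by (intro continuous_on_compose cont_cp continuous_on_subset[OF polyfun_cont[OF fp]]) auto
    have "open ((f \<circ> cp p0) -` (-{0}) \<inter> Np p0)"
      by (rule continuous_on_open_vimage[OF open_Np, THEN iffD1, OF cc, rule_format]) auto
    moreover have "p0 \<in> (f \<circ> cp p0) -` (-{0}) \<inter> Np p0"
      using p0 self_Np by (auto simp: cp_self)
    moreover have "(f \<circ> cp p0) -` (-{0}) \<inter> Np p0 \<subseteq> {p. f (\<lambda>e. hom (p e)) \<noteq> 0}"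
    proof
      fix q assume q: "q \<in> (f \<circ> cp p0) -` (-{0}) \<inter> Np p0"
      then have qN: "q \<in> Np p0" by blast
      note h = hom_cp[OF qN]
      have "f (\<lambda>e. hom (q e)) = (\<Prod>e\<in>UNIV. (if p0 e = Infty then (case q e of Fin x \<Rightarrow> x | Infty \<Rightarrow> 1) else 1) ^ d e) * f (cp p0 q)"
        apply (subst h(1)) apply (rule d[rule_format]) using h(2) by blast
      moreover have "(\<Prod>e\<in>UNIV. (if p0 e = Infty then (case q e of Fin x \<Rightarrow> x | Infty \<Rightarrow> 1) else 1) ^ d e) \<noteq> 0"
        using h(2) by (simp add: prod_zero_iff)
      ultimately show "q \<in> {p. f (\<lambda>e. hom (p e)) \<noteq> 0}" using q by auto
    qed
    ultimately show "\<exists>T. open T \<and> p0 \<in> T \<and> T \<subseteq> {p. f (\<lambda>e. hom (p e)) \<noteq> 0}" by blast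
  qed
  then show ?thesis unfolding closed_def by (simp add: Compl_eq)
qed

lemma zariski_closed_closed:
  assumes "zariski_closed (Z :: ('e::finite \<Rightarrow> p1) set)" shows "closed Z"
proof -
  obtain P where P: "\<forall>f\<in>P. multihom f" "Z = {p. \<forall>f\<in>P. f (\<lambda>e. hom (p e)) = 0}"
    using assms unfolding zariski_closed_def by blast
  have "Z = (\<Inter>f\<in>P. {p. f (\<lambda>e. hom (p e)) = 0})" using P(2) by auto
  then show ?thesis using P(1) multihom_closed by auto
qed

lemma closed_YV: "closed (YV (V :: ('e::finite \<Rightarrow> real) set))"
  unfolding YV_def zariski_closure_def
  by (intro closed_Inter) (auto intro: zariski_closed_closed)

lemma closure_sub_YV:
  assumes "A \<subseteq> V" shows "closure (emb ` A) \<subseteq> YV (V :: ('e::finite \<Rightarrow> real) set)"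
proof (rule closure_minimal[OF _ closed_YV])
  show "emb ` A \<subseteq> YV V" using assms unfolding YV_def zariski_closure_def by auto
qed

lemma polyfun_sum: "(\<And>i. i \<in> A \<Longrightarrow> f i \<in> polyfun) \<Longrightarrow> (\<lambda>z. \<Sum>i\<in>A. f i z) \<in> polyfun"
proof (cases "finite A")
  case True
  assume h: "\<And>i. i \<in> A \<Longrightarrow> f i \<in> polyfun"
  from True h show ?thesis
  proof (induction A rule: finite_induct)
    case empty then show ?case using polyfun.const[of 0] by simp
  next
    case (insert x F)
    have "(\<lambda>z. f x z + (\<Sum>i\<in>F. f i z)) \<in> polyfun"
      by (rule polyfun.add) (use insert in auto)
    then show ?case using insert by simp
  qed
next
  case False then show ?thesis using polyfun.const[of 0] by simp
qed

lemma polyfun_prod: "(\<And>i. i \<in> A \<Longrightarrow> f i \<in> polyfun) \<Longrightarrow> (\<lambda>z. \<Prod>i\<in>A. f i z) \<in> polyfun"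
proof (cases "finite A")
  case True
  assume h: "\<And>i. i \<in> A \<Longrightarrow> f i \<in> polyfun"
  from True h show ?thesis
  proof (induction A rule: finite_induct)
    case empty then show ?case using polyfun.const[of 1] by simp
  next
    case (insert x F)
    have "(\<lambda>z. f x z * (\<Prod>i\<in>F. f i z)) \<in> polyfun"
      by (rule polyfun.mult) (use insert in auto)
    then show ?case using insert by simp
  qed
next
  case False then show ?thesis using polyfun.const[of 1] by simp
qed

definition prj :: "'e::finite set \<Rightarrow> ('e \<Rightarrow> real) \<Rightarrow> real ^ 'e" where
  "prj G v = (\<chi> e. if e \<in> G then v e else 0)"

lemma inner_prj: "inner z (prj G v) = (\<Sum>e\<in>G. z $ e * v e)"
proof -
  have "inner z (prj G v) = (\<Sum>e\<in>UNIV. z $ e * (if e \<in> G then v e else 0))"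
    by (simp add: inner_vec_def prj_def)
  also have "\<dots> = (\<Sum>e\<in>UNIV. if e \<in> G then z $ e * v e else 0)"
    by (rule sum.cong) auto
  also have "\<dots> = (\<Sum>e\<in>G. z $ e * v e)"
    by (simp add: sum.If_cases)
  finally show ?thesis .
qed

lemma finite_part:
  fixes V :: "('e::finite \<Rightarrow> real) set"
  assumes V: "lin_subspace V" and p: "p \<in> YV V" and G: "\<forall>e\<in>G. p e \<noteq> Infty"
  shows "\<exists>v\<in>V. \<forall>e\<in>G. p e = Fin (v e)"
proof -
  define u where "u = (\<lambda>e. case p e of Fin x \<Rightarrow> x | Infty \<Rightarrow> 0)"
  have pu: "\<forall>e\<in>G. p e = Fin (u e)" using G by (auto simp: u_def split: p1.split)
  define W where "W = prj G ` V"
  have sW: "subspace W"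
    unfolding subspace_def W_def
  proof (intro conjI ballI allI)
    show "0 \<in> prj G ` V"
      using V unfolding lin_subspace_def by (intro image_eqI[of _ _ "\<lambda>_. 0"]) (auto simp: prj_def vec_eq_iff)
  next
    fix x y assume "x \<in> prj G ` V" "y \<in> prj G ` V"
    then obtain a b where ab: "a \<in> V" "b \<in> V" "x = prj G a" "y = prj G b" by blast
    then have "(\<lambda>e. a e + b e) \<in> V" using V unfolding lin_subspace_def by blast
    moreover have "x + y = prj G (\<lambda>e. a e + b e)" using ab by (auto simp: prj_def vec_eq_iff)
    ultimately show "x + y \<in> prj G ` V" by blast
  next
    fix c :: real and x assume "x \<in> prj G ` V"
    then obtain a where a: "a \<in> V" "x = prj G a" by blast
    then have "(\<lambda>e. c * a e) \<in> V" using V unfolding lin_subspace_def by blast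
    moreover have "c *\<^sub>R x = prj G (\<lambda>e. c * a e)" using a by (auto simp: prj_def vec_eq_iff)
    ultimately show "c *\<^sub>R x \<in> prj G ` V" by blast
  qed
  show ?thesis
  proof (cases "prj G u \<in> W")
    case True
    then obtain v where v: "v \<in> V" "prj G u = prj G v" unfolding W_def by blast
    have "\<forall>e\<in>G. u e = v e"
    proof
      fix e assume e: "e \<in> G"
      have "(prj G u) $ e = (prj G v) $ e" using v(2) by simp
      then show "u e = v e" using e by (simp add: prj_def)
    qed
    then show ?thesis using v pu by auto
  next
    case False
    obtain y z where yz: "y \<in> span W" "\<And>w. w \<in> span W \<Longrightarrow> orthogonal z w" "prj G u = y + z"
      using orthogonal_subspace_decomp_exists by blast
    have spW: "span W = W" using sW span_eq_iff by blast
    have yW: "y \<in> W" using yz(1) spW by simp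
    have zW: "inner z w = 0" if "w \<in> W" for w using yz(2)[of w] that span_base by (auto simp: orthogonal_def)
    have "z \<noteq> 0" using False yz(3) yW by auto
    then have zu: "inner z (prj G u) \<noteq> 0" using yz(3) zW[OF yW] by (simp add: inner_add_right)
    define F :: "('e \<Rightarrow> real \<times> real) \<Rightarrow> real" where
      "F = (\<lambda>zz. \<Sum>e\<in>G. z $ e * fst (zz e) * (\<Prod>e'\<in>G - {e}. snd (zz e')))"
    have Fpoly: "F \<in> polyfun"
      unfolding F_def
      by (intro polyfun_sum polyfun.mult polyfun.const polyfun.xcoord polyfun_prod polyfun.ycoord)
    have Fhom: "multihom F"
      unfolding multihom_def
    proof (intro conjI Fpoly exI[of _ "\<lambda>e. if e \<in> G then 1 else 0"] allI impI)
      fix zz and lam :: "'e \<Rightarrow> real"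
      have pr: "(\<Prod>e\<in>UNIV. lam e ^ (if e \<in> G then 1 else 0)) = (\<Prod>e\<in>G. lam e)"
        by (simp add: prod.If_cases if_distrib[of "\<lambda>n. lam _ ^ n"] cong: if_cong)
      have "F (\<lambda>e. (lam e * fst (zz e), lam e * snd (zz e)))
         = (\<Sum>e\<in>G. (lam e * (\<Prod>e'\<in>G - {e}. lam e')) * (z $ e * fst (zz e) * (\<Prod>e'\<in>G - {e}. snd (zz e'))))"
        unfolding F_def by (intro sum.cong refl) (simp add: prod.distrib algebra_simps)
      also have "\<dots> = (\<Sum>e\<in>G. (\<Prod>e'\<in>G. lam e') * (z $ e * fst (zz e) * (\<Prod>e'\<in>G - {e}. snd (zz e'))))"
        by (intro sum.cong refl) (simp add: prod.remove[symmetric])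
      also have "\<dots> = (\<Prod>e\<in>UNIV. lam e ^ (if e \<in> G then 1 else 0)) * F zz"
        unfolding pr F_def by (simp add: sum_distrib_left)
      finally show "F (\<lambda>e. (lam e * fst (zz e), lam e * snd (zz e))) = (\<Prod>e\<in>UNIV. lam e ^ (if e \<in> G then 1 else 0)) * F zz" .
    qed
    have Fv: "F (\<lambda>e. hom (emb v e)) = inner z (prj G v)" for v
      unfolding inner_prj F_def by (simp add: emb_def)
    have "zariski_closed {q. \<forall>f\<in>{F}. f (\<lambda>e. hom (q e)) = 0}"
      unfolding zariski_closed_def using Fhom by blast
    moreover have "emb ` V \<subseteq> {q. \<forall>f\<in>{F}. f (\<lambda>e. hom (q e)) = 0}"
      using Fv zW unfolding W_def by auto
    ultimately have "YV V \<subseteq> {q. \<forall>f\<in>{F}. f (\<lambda>e. hom (q e)) = 0}"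
      unfolding YV_def zariski_closure_def by blast
    then have "F (\<lambda>e. hom (p e)) = 0" using p by auto
    moreover have "F (\<lambda>e. hom (p e)) = inner z (prj G u)"
      unfolding inner_prj F_def using pu by (intro sum.cong refl) simp
    ultimately show ?thesis using zu by simp
  qed
qed

lemma sign_of_simps: "sign_of x = Pos \<longleftrightarrow> x > 0" "sign_of x = Neg \<longleftrightarrow> x < 0" "sign_of x = Zer \<longleftrightarrow> x = 0"
  by (auto simp: sign_of_def)

lemma far:
  fixes v w s R :: real assumes w: "w \<noteq> 0"
  shows "eventually (\<lambda>t. R < \<bar>v + t*w + s/t\<bar> \<and> sign_of (v + t*w + s/t) = sign_of w) at_top"
proof (rule eventually_at_top_linorder[THEN iffD2], intro exI allI impI)
  fix t assume t: "t \<ge> max 1 ((\<bar>R\<bar> + \<bar>v\<bar> + \<bar>s\<bar> + 1) / \<bar>w\<bar>)"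
  have aw: "\<bar>w\<bar> > 0" using w by simp
  have t1: "t \<ge> 1" using t by simp
  have "(\<bar>R\<bar> + \<bar>v\<bar> + \<bar>s\<bar> + 1) / \<bar>w\<bar> \<le> t" using t by simp
  then have big: "\<bar>R\<bar> + \<bar>v\<bar> + \<bar>s\<bar> + 1 \<le> t * \<bar>w\<bar>" using aw by (simp add: pos_divide_le_eq)
  have st0: "\<bar>s\<bar> / t \<le> \<bar>s\<bar> / 1" by (rule divide_left_mono) (use t1 in auto)
  have st: "\<bar>s/t\<bar> \<le> \<bar>s\<bar>" using st0 t1 by (simp add: abs_divide)
  show "R < \<bar>v + t*w + s/t\<bar> \<and> sign_of (v + t*w + s/t) = sign_of w"
  proof (cases "w > 0")
    case True
    then have "t * \<bar>w\<bar> = t * w" by simp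
    moreover have "- \<bar>v\<bar> \<le> v" "- \<bar>s/t\<bar> \<le> s/t" "R \<le> \<bar>R\<bar>"
      using abs_ge_minus_self[of v] abs_ge_minus_self[of "s/t"] abs_ge_self[of R] by linarith+
    ultimately have gt: "v + t*w + s/t > \<bar>R\<bar>" "R \<le> \<bar>R\<bar>" using big st by linarith+
    then have "R < \<bar>v + t*w + s/t\<bar>" by linarith
    moreover have "sign_of (v + t*w + s/t) = Pos" unfolding sign_of_simps using gt abs_ge_zero[of R] by linarith
    moreover have "sign_of w = Pos" unfolding sign_of_simps using True by linarith
    ultimately show ?thesis by simp
  next
    case False
    then have "w < 0" using w by simp
    then have "t * \<bar>w\<bar> = - (t * w)" by simp
    moreover have "v \<le> \<bar>v\<bar>" "s/t \<le> \<bar>s/t\<bar>" "- R \<le> \<bar>R\<bar>"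
      using abs_ge_self[of v] abs_ge_self[of "s/t"] abs_ge_minus_self[of R] by linarith+
    ultimately have gt: "v + t*w + s/t < - \<bar>R\<bar>" "- R \<le> \<bar>R\<bar>" using big st by linarith+
    then have "R < \<bar>v + t*w + s/t\<bar>" by linarith
    moreover have "sign_of (v + t*w + s/t) = Neg" unfolding sign_of_simps using gt abs_ge_zero[of R] by linarith
    moreover have "sign_of w = Neg" unfolding sign_of_simps using \<open>w < 0\<close> by linarith
    ultimately show ?thesis by simp
  qed
qed

lemma near_tendsto: "((\<lambda>t. v + t * 0 + s / t) \<longlongrightarrow> (v::real)) at_top"
proof -
  have "((\<lambda>t::real. s / t) \<longlongrightarrow> 0) at_top"
    by (rule tendsto_divide_0[OF tendsto_const filterlim_at_top_imp_at_infinity[OF filterlim_ident]])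
  then have "((\<lambda>t::real. v + s / t) \<longlongrightarrow> v + 0) at_top"
    by (intro tendsto_add tendsto_const)
  then show ?thesis by simp
qed

lemma approx:
  fixes p :: "'e::finite \<Rightarrow> p1" and v w s :: "'e \<Rightarrow> real"
  assumes pdef: "\<forall>e. p e = (if w e = 0 then Fin (v e) else Infty)"
    and ev: "eventually (\<lambda>t. (\<lambda>e. v e + t * w e + s e / t) \<in> A) at_top"
  shows "p \<in> closure (emb ` A)"
  unfolding closure_iff_nhds_not_empty
proof (intro allI impI)
  fix B U assume UB: "U \<subseteq> B" and oU: "open U" and pU: "p \<in> U"
  have "openin (product_topology (\<lambda>i. euclidean) UNIV) U" using oU[unfolded open_fun_def] .
  note basis = product_topology_open_contains_basis[OF this pU]
  obtain X where
    X: "p \<in> (\<Pi>\<^sub>E i\<in>UNIV. X i)" "\<forall>i. openin euclidean (X i)" "finite {i. X i \<noteq> topspace euclidean}"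
       "(\<Pi>\<^sub>E i\<in>UNIV. X i) \<subseteq> U" using basis by metis
  have evX: "eventually (\<lambda>t. Fin (v e + t * w e + s e / t) \<in> X e) at_top" for e
  proof -
    have oX: "open (X e)" using X(2) open_openin by metis
    have pX: "p e \<in> X e" using X(1) by (simp add: PiE_iff)
    show ?thesis
    proof (cases "w e = 0")
      case True
      have "p e = Fin (v e)" using pdef True by simp
      then have "v e \<in> Fin -` X e" using pX by simp
      moreover have "open (Fin -` X e)" using oX by (simp add: open_p1_def)
      ultimately have "eventually (\<lambda>t. v e + t * 0 + s e / t \<in> Fin -` X e) at_top"
        by (rule topological_tendstoD[OF near_tendsto[of "v e" "s e"], rotated])
      then show ?thesis using True by simp
    next
      case False
      have "p e = Infty" using pdef False by simp
      then have "Infty \<in> X e" using pX by simp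
      then obtain R where R: "\<forall>x. R < \<bar>x\<bar> \<longrightarrow> Fin x \<in> X e" using oX unfolding open_p1_def by blast
      show ?thesis using far[OF False, of R "v e" "s e"]
        by (rule eventually_mono) (use R in blast)
    qed
  qed
  have "eventually (\<lambda>t. \<forall>e. Fin (v e + t * w e + s e / t) \<in> X e) at_top"
    by (rule eventually_all_finite) (rule evX)
  then have "eventually (\<lambda>t. (\<forall>e. Fin (v e + t * w e + s e / t) \<in> X e) \<and> (\<lambda>e. v e + t * w e + s e / t) \<in> A) at_top"
    using ev by (rule eventually_conj)
  then have "\<exists>N. \<forall>t\<ge>N. (\<forall>e. Fin (v e + t * w e + s e / t) \<in> X e) \<and> (\<lambda>e. v e + t * w e + s e / t) \<in> A"
    by (simp only: eventually_at_top_linorder)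
  then obtain N where N: "\<forall>t\<ge>N. (\<forall>e. Fin (v e + t * w e + s e / t) \<in> X e) \<and> (\<lambda>e. v e + t * w e + s e / t) \<in> A"
    by (rule exE)
  have N': "(\<forall>e. Fin (v e + N * w e + s e / N) \<in> X e) \<and> (\<lambda>e. v e + N * w e + s e / N) \<in> A"
    by (rule N[rule_format]) (rule order_refl)
  define q where "q = (\<lambda>e. v e + N * w e + s e / N)"
  have NN: "(\<forall>e. Fin (q e) \<in> X e) \<and> q \<in> A" using N' unfolding q_def by simp
  have "\<forall>i. emb q i \<in> X i" using NN by (simp add: emb_def)
  then have "emb q \<in> (\<Pi>\<^sub>E i\<in>UNIV. X i)" by (simp add: PiE_iff)
  then have "emb q \<in> B" using X(4) UB by blast
  moreover have "emb q \<in> emb ` A" using NN by blast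
  ultimately show "emb ` A \<inter> B \<noteq> {}" by blast
qed

lemma sign_ev:
  fixes v w s :: real
  assumes "sign_of s = S" "w \<noteq> 0 \<longrightarrow> sign_of w = S" "w = 0 \<longrightarrow> (v = 0 \<or> sign_of v = S)"
  shows "eventually (\<lambda>t. sign_of (v + t*w + s/t) = S) at_top"
proof (cases "w = 0")
  case False
  show ?thesis using far[OF False, of 0 v s] by (rule eventually_mono) (use assms(2) False in auto)
next
  case True
  show ?thesis
  proof (rule eventually_at_top_linorder[THEN iffD2], intro exI allI impI)
    fix t :: real assume t: "t \<ge> 1"
    show "sign_of (v + t*w + s/t) = S"
    proof (cases S)
      case Pos
      then have "s > 0" "v \<ge> 0" using assms True by (auto simp: sign_of_def split: if_splits)
      moreover have "s / t > 0" using t \<open>s > 0\<close> by simp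
      ultimately have "v + s / t > 0" by linarith
      then show ?thesis using Pos True by (simp add: sign_of_def)
    next
      case Neg
      then have "s < 0" "v \<le> 0" using assms True by (auto simp: sign_of_def split: if_splits)
      moreover have "s / t < 0" using t \<open>s < 0\<close> by (simp add: divide_neg_pos)
      ultimately have "v + s / t < 0" by linarith
      then show ?thesis using Neg True by (simp add: sign_of_def)
    next
      case Zer
      then have "s = 0" "v = 0" using assms True by (auto simp: sign_of_def split: if_splits)
      then show ?thesis using Zer True by (simp add: sign_of_def)
    qed
  qed
qed

lemma signmap_apply[simp]: "signmap v e = sign_of (v e)" by (simp add: signmap_def)

lemma zer_signmap: "zer (signmap v) = {e. v e = 0}" by (auto simp: zer_def sign_of_simps)
lemma pos_signmap: "pos (signmap v) = {e. v e > 0}" by (auto simp: pos_def sign_of_simps)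
lemma neg_signmap: "neg (signmap v) = {e. v e < 0}" by (auto simp: neg_def sign_of_simps)

lemma sle_trans: "sle X Y \<Longrightarrow> sle Y Z \<Longrightarrow> sle X Z" by (auto simp: sle_def)

lemma sle_eq: "sle X Y \<Longrightarrow> X e \<noteq> Zer \<Longrightarrow> Y e = X e"
  by (cases "X e") (auto simp: sle_def pos_def neg_def)

lemma lin_add: "lin_subspace V \<Longrightarrow> v \<in> V \<Longrightarrow> w \<in> V \<Longrightarrow> (\<lambda>e. v e + w e) \<in> V"
  by (simp add: lin_subspace_def)
lemma lin_scale: "lin_subspace V \<Longrightarrow> v \<in> V \<Longrightarrow> (\<lambda>e. c * v e) \<in> V"
  by (simp add: lin_subspace_def)

lemma lin_comb3:
  assumes "lin_subspace V" "v \<in> V" "w \<in> V" "s \<in> V"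
  shows "(\<lambda>e. v e + t * w e + s e / t) \<in> V"
proof -
  have "(\<lambda>e. (\<lambda>e. v e + (\<lambda>e. t * w e) e) e + (\<lambda>e. (1/t) * s e) e) \<in> V"
    by (intro lin_add lin_scale assms)
  then show ?thesis by simp
qed

lemma lin_comb2:
  assumes "lin_subspace V" "v \<in> V" "w \<in> V"
  shows "(\<lambda>e. v e + t * w e) \<in> V"
proof -
  have "(\<lambda>e. v e + (\<lambda>e. t * w e) e) \<in> V"
    by (intro lin_add lin_scale assms)
  then show ?thesis by simp
qed

lemma ev_ex: "eventually P (at_top :: real filter) \<Longrightarrow> \<exists>t. P t"
proof -
  assume "eventually P at_top"
  then have "\<exists>N. \<forall>t\<ge>N. P t" by (simp only: eventually_at_top_linorder)
  then obtain N where "\<forall>t\<ge>N. P t" by (rule exE)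
  then have "P N" by (rule allE[of _ N]) simp
  then show ?thesis by blast
qed

lemma small_pert:
  fixes x f :: real assumes x: "x \<noteq> 0"
  shows "eventually (\<lambda>t. sign_of (x + f / t) = sign_of x) at_top"
proof -
  have o: "open {y::real. sign_of y = sign_of x}"
  proof (cases "x > 0")
    case True
    then have "{y::real. sign_of y = sign_of x} = {y. 0 < y}" by (auto simp: sign_of_def)
    moreover have "open {y::real. 0 < y}" by (intro open_Collect_less continuous_intros)
    ultimately show ?thesis by simp
  next
    case False
    then have "{y::real. sign_of y = sign_of x} = {y. y < 0}" using x by (auto simp: sign_of_def)
    moreover have "open {y::real. y < 0}" by (intro open_Collect_less continuous_intros)
    ultimately show ?thesis by simp
  qed
  have "eventually (\<lambda>t. x + t * 0 + f / t \<in> {y::real. sign_of y = sign_of x}) at_top"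
    by (rule topological_tendstoD[OF near_tendsto o]) simp
  then show ?thesis by simp
qed

lemma perturb:
  fixes x f :: "'e::finite \<Rightarrow> real"
  shows "\<exists>t\<ge>1. \<forall>e. x e \<noteq> 0 \<longrightarrow> sign_of (x e + f e / t) = sign_of (x e)"
proof -
  have "eventually (\<lambda>t. x e \<noteq> 0 \<longrightarrow> sign_of (x e + f e / t) = sign_of (x e)) at_top" for e
  proof (cases "x e = 0")
    case True then show ?thesis by simp
  next
    case False
    show ?thesis by (rule eventually_mono[OF small_pert[OF False, of "f e"]]) simp
  qed
  then have "eventually (\<lambda>t. \<forall>e. x e \<noteq> 0 \<longrightarrow> sign_of (x e + f e / t) = sign_of (x e)) at_top"
    by (rule eventually_all_finite)
  then have "eventually (\<lambda>t. t \<ge> 1 \<and> (\<forall>e. x e \<noteq> 0 \<longrightarrow> sign_of (x e + f e / t) = sign_of (x e))) at_top"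
    by (intro eventually_conj eventually_ge_at_top)
  from ev_ex[OF this] show ?thesis by blast
qed

lemma tope_zero:
  fixes V :: "('e::finite \<Rightarrow> real) set"
  assumes V: "lin_subspace V" and s: "s \<in> V" "signmap s \<in> topes V" and w: "w \<in> V" and e: "s e = 0"
  shows "w e = 0"
proof -
  obtain t where t: "t \<ge> 1" "\<forall>e. s e \<noteq> 0 \<longrightarrow> sign_of (s e + w e / t) = sign_of (s e)"
    using perturb[of s w] by blast
  define y where "y = (\<lambda>e. s e + (1/t) * w e)"
  have yV: "y \<in> V" unfolding y_def by (rule lin_comb2[OF V s(1) w])
  have y': "y = (\<lambda>e. s e + w e / t)" by (simp add: y_def)
  have yy: "\<forall>e. sign_of (s e) \<noteq> Zer \<longrightarrow> sign_of (y e) = sign_of (s e)"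
    using t(2) unfolding y' by (simp add: sign_of_simps)
  have "sle (signmap s) (signmap y)"
    unfolding sle_def pos_def neg_def signmap_apply using yy by force
  moreover have "signmap y \<in> covectors V" using yV by (simp add: covectors_def)
  ultimately have "signmap y = signmap s" using s(2) unfolding topes_def by blast
  then have "sign_of (y e) = sign_of (s e)" by (metis signmap_apply)
  then have "sign_of (w e / t) = Zer" using e by (simp add: y' sign_of_def)
  then have "w e / t = 0" by (simp only: sign_of_simps)
  then show ?thesis using t(1) by simp
qed

lemma tope_zer_flat:
  fixes V :: "('e::finite \<Rightarrow> real) set"
  assumes V: "lin_subspace V" and S: "S \<in> topes V" and F: "F \<in> flats V"
  shows "zer S \<subseteq> F"
proof
  fix e assume e: "e \<in> zer S"
  obtain s where s: "s \<in> V" "S = signmap s" using S by (auto simp: topes_def covectors_def)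
  obtain f where f: "f \<in> V" "F = zer (signmap f)" using F by (auto simp: flats_def covectors_def)
  have "s e = 0" using e s(2) by (simp add: zer_signmap)
  then have "f e = 0" using tope_zero[OF V s(1) _ f(1)] S s(2) by blast
  then show "e \<in> F" using f(2) by (simp add: zer_signmap)
qed

lemma restr_apply: "restr A X e = (if e \<in> A then X e else Zer)" by (simp add: restr_def)
lemma pos_restr: "pos (restr A X) = A \<inter> pos X" by (auto simp: pos_def restr_def)
lemma neg_restr: "neg (restr A X) = A \<inter> neg X" by (auto simp: neg_def restr_def)
lemma restr_restr: "restr A (restr A X) = restr A X" by (auto simp: restr_def)

lemma triple_minor:
  fixes V :: "('e::finite \<Rightarrow> real) set"
  assumes V: "lin_subspace V" and tr: "(I, J, S) \<in> triples V"
  shows "(I, J, restr (J - I) S) \<in> cell_index V"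
proof -
  have S: "S \<in> topes V" and IJ: "I \<in> flats V" "J \<in> flats V" "I \<subseteq> J" and ra: "rel_acyclic V I S"
    using tr by (auto simp: triples_def)
  obtain X where X: "X \<in> covectors V" "sle X S" "zer X = I" using ra by (auto simp: rel_acyclic_def)
  have zS: "zer S \<subseteq> I" by (rule tope_zer_flat[OF V S IJ(1)])
  have eqT: "restr J X = restr (J - I) S"
  proof
    fix e show "restr J X e = restr (J - I) S e"
    proof (cases "e \<in> J")
      case True
      show ?thesis
      proof (cases "e \<in> I")
        case True then show ?thesis using X(3) \<open>e \<in> J\<close> by (auto simp: restr_def zer_def)
      next
        case False
        then have "X e \<noteq> Zer" using X(3) by (auto simp: zer_def)
        then show ?thesis using sle_eq[OF X(2)] False True by (simp add: restr_def)
      qed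
    qed (simp add: restr_def)
  qed
  have mc: "restr (J - I) S \<in> minor_covectors V I J"
    unfolding minor_covectors_def
    by (intro CollectI exI[of _ X] conjI) (use X(1,3) eqT in auto)
  have mx: "Y = restr (J - I) S" if Y: "Y \<in> minor_covectors V I J" "sle (restr (J - I) S) Y" for Y
  proof -
    obtain Z where Z: "Y = restr J Z" "Z \<in> covectors V" "I \<subseteq> zer Z" using Y(1) by (auto simp: minor_covectors_def)
    show ?thesis
    proof
      fix e show "Y e = restr (J - I) S e"
      proof (cases "e \<in> J - I")
        case True
        then have "S e \<noteq> Zer" using zS by (auto simp: zer_def)
        then have "restr (J - I) S e \<noteq> Zer" using True by (simp add: restr_def)
        then show ?thesis using sle_eq[OF Y(2)] by simp
      next
        case False
        then show ?thesis using Z(1,3) by (auto simp: restr_def zer_def)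
      qed
    qed
  qed
  have "restr (J - I) S \<in> minor_topes V I J"
    unfolding minor_topes_def using mc mx by auto
  then show ?thesis using IJ by (simp add: cell_index_def)
qed

lemma cell_index_rep:
  fixes V :: "('e::finite \<Rightarrow> real) set"
  assumes V: "lin_subspace V" and ci: "(F, G, T) \<in> cell_index V"
  shows "\<exists>x\<in>V. (\<forall>e\<in>F. x e = 0) \<and> T = restr G (signmap x) \<and> (\<forall>e\<in>G - F. x e \<noteq> 0)"
proof -
  have T: "T \<in> minor_topes V F G" and FG: "F \<in> flats V" "G \<in> flats V" "F \<subseteq> G"
    using ci by (auto simp: cell_index_def)
  have Tmc: "T \<in> minor_covectors V F G" and Tmax: "\<forall>Y\<in>minor_covectors V F G. sle T Y \<longrightarrow> Y = T"
    using T by (auto simp: minor_topes_def)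
  obtain X where X: "T = restr G X" "X \<in> covectors V" "F \<subseteq> zer X"
    using Tmc by (auto simp: minor_covectors_def)
  obtain x where x: "x \<in> V" "X = signmap x" using X(2) by (auto simp: covectors_def)
  have xF: "\<forall>e\<in>F. x e = 0" using X(3) x(2) by (auto simp: zer_signmap)
  obtain f where f: "f \<in> V" "F = zer (signmap f)" using FG(1) by (auto simp: flats_def covectors_def)
  have nz: "x e \<noteq> 0" if e: "e \<in> G - F" for e
  proof
    assume xe: "x e = 0"
    obtain t where t: "t \<ge> 1" "\<forall>e. x e \<noteq> 0 \<longrightarrow> sign_of (x e + f e / t) = sign_of (x e)"
      using perturb[of x f] by blast
    define y where "y = (\<lambda>e. x e + (1/t) * f e)"
    have yV: "y \<in> V" unfolding y_def by (rule lin_comb2[OF V x(1) f(1)])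
    have y': "y = (\<lambda>e. x e + f e / t)" by (simp add: y_def)
    have Fy: "F \<subseteq> zer (signmap y)"
      using xF f(2) by (auto simp: zer_signmap y')
    have Ymc: "restr G (signmap y) \<in> minor_covectors V F G"
      unfolding minor_covectors_def using yV Fy by (auto simp: covectors_def)
    have yy: "\<forall>e. sign_of (x e) \<noteq> Zer \<longrightarrow> sign_of (y e) = sign_of (x e)"
      using t(2) unfolding y' by (simp add: sign_of_simps)
    have "sle T (restr G (signmap y))"
      unfolding X(1) x(2) sle_def pos_def neg_def restr_apply signmap_apply using yy by force
    then have "restr G (signmap y) = T" using Tmax Ymc by blast
    then have "sign_of (y e) = sign_of (x e)" using e X(1) x(2) by (metis DiffD1 restr_apply signmap_apply)
    moreover have "f e \<noteq> 0" using e f(2) by (auto simp: zer_signmap)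
    ultimately show False using xe t(1) unfolding y' by (simp add: sign_of_def split: if_splits)
  qed
  show ?thesis using x xF X(1) nz by blast
qed

lemma restr_T:
  fixes V :: "('e::finite \<Rightarrow> real) set"
  assumes V: "lin_subspace V" and ci: "(F, G, T) \<in> cell_index V"
  shows "restr (G - F) T = T"
proof -
  obtain x where x: "x \<in> V" "\<forall>e\<in>F. x e = 0" "T = restr G (signmap x)"
    using cell_index_rep[OF V ci] by blast
  show ?thesis unfolding x(3) using x(2) by (auto simp: restr_def fun_eq_iff sign_of_def)
qed

lemma cell_point:
  fixes V :: "('e::finite \<Rightarrow> real) set"
  assumes V: "lin_subspace V" and ci: "(F, G, T) \<in> cell_index V"
  shows "\<exists>p0. p0 \<in> cellY V F G T \<and> (\<forall>e. p0 e = Fin 0 \<longleftrightarrow> e \<in> F) \<and> (\<forall>e. p0 e = Infty \<longleftrightarrow> e \<notin> G)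
     \<and> (\<forall>e\<in>G - F. \<forall>y. p0 e = Fin y \<longrightarrow> sign_of y = T e)"
proof -
  have FG: "F \<in> flats V" "G \<in> flats V" "F \<subseteq> G" using ci by (auto simp: cell_index_def)
  obtain x where x: "x \<in> V" "\<forall>e\<in>F. x e = 0" "T = restr G (signmap x)" "\<forall>e\<in>G - F. x e \<noteq> 0"
    using cell_index_rep[OF V ci] by blast
  obtain g where g: "g \<in> V" "G = zer (signmap g)" using FG(2) by (auto simp: flats_def covectors_def)
  have Gg: "e \<in> G \<longleftrightarrow> g e = 0" for e using g(2) by (simp add: zer_signmap)
  define p0 where "p0 = (\<lambda>e. if g e = 0 then Fin (x e) else Infty)"
  have zV: "(\<lambda>_. 0) \<in> V" using V by (simp add: lin_subspace_def)
  have "p0 \<in> closure (emb ` V)"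
  proof (rule approx[of p0 g x "\<lambda>_. 0"])
    show "\<forall>e. p0 e = (if g e = 0 then Fin (x e) else Infty)" by (simp add: p0_def)
    show "\<forall>\<^sub>F t in at_top. (\<lambda>e. x e + t * g e + 0 / t) \<in> V"
      using lin_comb3[OF V x(1) g(1) zV] by simp
  qed
  then have pY: "p0 \<in> YV V" using closure_sub_YV[of V V] by blast
  have "p0 \<in> cellY V F G T"
    unfolding cellY_def using pY x FG(3) Gg
    by (auto simp: p0_def pos_restr neg_restr pos_signmap neg_signmap)
  moreover have "\<forall>e. p0 e = Fin 0 \<longleftrightarrow> e \<in> F"
    using x(2,4) FG(3) Gg by (auto simp: p0_def)
  moreover have "\<forall>e. p0 e = Infty \<longleftrightarrow> e \<notin> G"
    using Gg by (auto simp: p0_def)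
  moreover have "\<forall>e\<in>G - F. \<forall>y. p0 e = Fin y \<longrightarrow> sign_of y = T e"
    using Gg x(3) by (auto simp: p0_def restr_def)
  ultimately show ?thesis by blast
qed

lemma cellY_inj:
  fixes V :: "('e::finite \<Rightarrow> real) set"
  assumes V: "lin_subspace V" and ci: "(F, G, T) \<in> cell_index V" and ci': "(F', G', T') \<in> cell_index V"
    and eq: "cellY V F G T = cellY V F' G' T'"
  shows "F = F' \<and> G = G' \<and> T = T'"
proof -
  obtain p0 where p0: "p0 \<in> cellY V F G T" "\<forall>e. p0 e = Fin 0 \<longleftrightarrow> e \<in> F" "\<forall>e. p0 e = Infty \<longleftrightarrow> e \<notin> G"
     "\<forall>e\<in>G - F. \<forall>y. p0 e = Fin y \<longrightarrow> sign_of y = T e"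
    using cell_point[OF V ci] by blast
  obtain p1 where p1: "p1 \<in> cellY V F' G' T'" "\<forall>e. p1 e = Fin 0 \<longleftrightarrow> e \<in> F'" "\<forall>e. p1 e = Infty \<longleftrightarrow> e \<notin> G'"
    using cell_point[OF V ci'] by blast
  have p0': "p0 \<in> cellY V F' G' T'" using p0(1) eq by simp
  have p1': "p1 \<in> cellY V F G T" using p1(1) eq by simp
  have "F' \<subseteq> F" using p0' p0(2) by (auto simp: cellY_def)
  moreover have "F \<subseteq> F'" using p1' p1(2) by (auto simp: cellY_def)
  moreover have "G \<subseteq> G'" using p0' p0(3) by (auto simp: cellY_def)
  moreover have "G' \<subseteq> G" using p1' p1(3) by (auto simp: cellY_def)
  ultimately have FF: "F' = F" and GG: "G' = G" by auto
  obtain x' where x': "x' \<in> V" "\<forall>e\<in>F'. x' e = 0" "T' = restr G' (signmap x')" "\<forall>e\<in>G' - F'. x' e \<noteq> 0"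
    using cell_index_rep[OF V ci'] by blast
  have rT: "restr (G - F) T = T" by (rule restr_T[OF V ci])
  have rT': "restr (G - F) T' = T'" using restr_T[OF V ci'] FF GG by simp
  have "T = T'"
  proof
    fix e show "T e = T' e"
    proof (cases "e \<in> G - F")
      case True
      then have "x' e \<noteq> 0" using x'(4) FF GG by simp
      then have "T' e = Pos \<or> T' e = Neg" using True x'(3) GG by (auto simp: restr_def sign_of_def)
      then show ?thesis
      proof
        assume "T' e = Pos"
        then have "e \<in> pos T'" by (simp add: pos_def)
        then obtain y where "y > 0" "p0 e = Fin y" using p0' by (auto simp: cellY_def)
        then have "sign_of y = T e" using p0(4) True by blast
        then show ?thesis using \<open>y > 0\<close> \<open>T' e = Pos\<close> by (simp add: sign_of_def)
      next
        assume "T' e = Neg"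
        then have "e \<in> neg T'" by (simp add: neg_def)
        then obtain y where "y < 0" "p0 e = Fin y" using p0' by (auto simp: cellY_def)
        then have "sign_of y = T e" using p0(4) True by blast
        then show ?thesis using \<open>y < 0\<close> \<open>T' e = Neg\<close> by (simp add: sign_of_def)
      qed
    next
      case False
      then show ?thesis using rT rT' by (metis restr_apply)
    qed
  qed
  then show ?thesis using FF GG by simp
qed

lemma main_cell:
  fixes V :: "('e::finite \<Rightarrow> real) set"
  assumes V: "lin_subspace V" and tr: "(I, J, S) \<in> triples V"
  shows "cellY V I J (restr (J - I) S) = cellSY V S I J"
proof -
  have S: "S \<in> topes V" and IJ: "I \<in> flats V" "J \<in> flats V" "I \<subseteq> J" and raJ: "rel_acyclic V J S"
    using tr by (auto simp: triples_def)
  have zS: "zer S \<subseteq> I" by (rule tope_zer_flat[OF V S IJ(1)])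
  obtain s where s: "s \<in> V" "S = signmap s" using S by (auto simp: topes_def covectors_def)
  obtain X where X: "X \<in> covectors V" "sle X S" "zer X = J" using raJ by (auto simp: rel_acyclic_def)
  obtain w where w: "w \<in> V" "X = signmap w" using X(1) by (auto simp: covectors_def)
  have Jw: "e \<in> J \<longleftrightarrow> w e = 0" for e using X(3) w(2) by (auto simp: zer_signmap)
  define cond where "cond = {p :: 'e \<Rightarrow> p1. (\<forall>e\<in>I. p e = Fin 0)
      \<and> (\<forall>e\<in>(J - I) \<inter> pos S. \<exists>x>0. p e = Fin x)
      \<and> (\<forall>e\<in>(J - I) \<inter> neg S. \<exists>x<0. p e = Fin x)
      \<and> (\<forall>e. e \<notin> J \<longrightarrow> p e = Infty)}"
  have c1: "cellY V I J (restr (J - I) S) = YV V \<inter> cond"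
    unfolding cellY_def cond_def pos_restr neg_restr by simp
  have c2: "cellSY V S I J = SY V S \<inter> cond"
    unfolding cellSY_def cond_def by simp
  have "SY V S \<subseteq> YV V" unfolding SY_def by (rule closure_sub_YV) auto
  moreover have "p \<in> SY V S" if p: "p \<in> YV V" "p \<in> cond" for p
  proof -
    have SJ: "S e = Pos \<or> S e = Neg" if "e \<in> J - I" for e
      using that zS by (cases "S e") (auto simp: zer_def)
    have fin: "\<forall>e\<in>J. p e \<noteq> Infty"
    proof
      fix e assume e: "e \<in> J"
      show "p e \<noteq> Infty"
      proof (cases "e \<in> I")
        case True then show ?thesis using p(2) by (auto simp: cond_def)
      next
        case False
        have pc: "\<forall>e\<in>(J - I) \<inter> pos S. \<exists>x>0. p e = Fin x" "\<forall>e\<in>(J - I) \<inter> neg S. \<exists>x<0. p e = Fin x"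
          using p(2) unfolding cond_def by blast+
        have "S e = Pos \<or> S e = Neg" using SJ e False by blast
        then have "e \<in> (J - I) \<inter> pos S \<or> e \<in> (J - I) \<inter> neg S" using e False by (auto simp: pos_def neg_def)
        then obtain y where "p e = Fin y" using pc by blast
        then show ?thesis by simp
      qed
    qed
    obtain v where v: "v \<in> V" "\<forall>e\<in>J. p e = Fin (v e)" using finite_part[OF V p(1) fin] by blast
    have pdef: "\<forall>e. p e = (if w e = 0 then Fin (v e) else Infty)"
      using v(2) p(2) Jw by (auto simp: cond_def)
    have sg: "eventually (\<lambda>t. sign_of (v e + t * w e + s e / t) = S e) at_top" for e
    proof (rule sign_ev)
      show "sign_of (s e) = S e" using s(2) by simp
      show "w e \<noteq> 0 \<longrightarrow> sign_of (w e) = S e"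
      proof
        assume "w e \<noteq> 0"
        then have "X e \<noteq> Zer" using w(2) by (simp add: sign_of_simps)
        then show "sign_of (w e) = S e" using sle_eq[OF X(2)] w(2) by (metis signmap_apply)
      qed
      show "w e = 0 \<longrightarrow> v e = 0 \<or> sign_of (v e) = S e"
      proof
        assume "w e = 0"
        then have eJ: "e \<in> J" using Jw by simp
        show "v e = 0 \<or> sign_of (v e) = S e"
        proof (cases "e \<in> I")
          case True
          then have "p e = Fin 0" using p(2) by (auto simp: cond_def)
          then show ?thesis using v(2) eJ by simp
        next
          case False
          then have "S e = Pos \<or> S e = Neg" using SJ eJ by blast
          then show ?thesis
          proof
            assume Se: "S e = Pos"
            have "e \<in> (J - I) \<inter> pos S" using Se eJ False by (simp add: pos_def)
            then obtain y where "y > 0" "p e = Fin y" using p(2) unfolding cond_def by blast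
            then have "v e > 0" using v(2) eJ by simp
            then show ?thesis using Se by (simp add: sign_of_def)
          next
            assume Se: "S e = Neg"
            have "e \<in> (J - I) \<inter> neg S" using Se eJ False by (simp add: neg_def)
            then obtain y where "y < 0" "p e = Fin y" using p(2) unfolding cond_def by blast
            then have "v e < 0" using v(2) eJ by simp
            then show ?thesis using Se by (simp add: sign_of_def)
          qed
        qed
      qed
    qed
    have "eventually (\<lambda>t. \<forall>e. sign_of (v e + t * w e + s e / t) = S e) at_top"
      by (rule eventually_all_finite) (rule sg)
    then have ev: "eventually (\<lambda>t. (\<lambda>e. v e + t * w e + s e / t) \<in> V \<inter> signmap -` {S}) at_top"
    proof (rule eventually_mono)
      fix t assume "\<forall>e. sign_of (v e + t * w e + s e / t) = S e"
      then have "signmap (\<lambda>e. v e + t * w e + s e / t) = S" by (simp add: fun_eq_iff)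
      then show "(\<lambda>e. v e + t * w e + s e / t) \<in> V \<inter> signmap -` {S}"
        using lin_comb3[OF V v(1) w(1) s(1)] by simp
    qed
    show ?thesis unfolding SY_def by (rule approx[OF pdef ev])
  qed
  ultimately have "YV V \<inter> cond = SY V S \<inter> cond" by blast
  then show ?thesis using c1 c2 by simp
qed

lemma tope_exists:
  fixes V :: "('e::finite \<Rightarrow> real) set"
  assumes X: "X \<in> covectors V"
  shows "\<exists>S\<in>topes V. sle X S"
proof -
  define supp :: "('e \<Rightarrow> sgn) \<Rightarrow> 'e set" where "supp = (\<lambda>Y. {e. Y e \<noteq> Zer})"
  define P where "P = (\<lambda>n. \<exists>Y\<in>covectors V. sle X Y \<and> card (supp Y) = n)"
  have P0: "P (card (supp X))" unfolding P_def using X by (auto simp: sle_def)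
  have bd: "\<forall>n. P n \<longrightarrow> (\<lambda>n. n) n < card (UNIV :: 'e set) + 1"
    unfolding P_def by (auto simp: less_Suc_eq_le intro: card_mono)
  obtain n where n: "P n" "\<forall>m. P m \<longrightarrow> m \<le> n" using ex_has_greatest_nat[of P, OF P0 bd] by blast
  obtain Y where Y: "Y \<in> covectors V" "sle X Y" "card (supp Y) = n" using n(1) unfolding P_def by blast
  have "Y \<in> topes V"
    unfolding topes_def
  proof (intro CollectI conjI ballI impI Y(1))
    fix Z assume Z: "Z \<in> covectors V" "sle Y Z"
    have "P (card (supp Z))" unfolding P_def using Z sle_trans[OF Y(2) Z(2)] by blast
    then have le: "card (supp Z) \<le> card (supp Y)" using n(2) Y(3) by blast
    have sub: "supp Y \<subseteq> supp Z" unfolding supp_def using sle_eq[OF Z(2)] by auto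
    have eqs: "supp Y = supp Z" by (rule card_seteq[OF finite sub le])
    show "Z = Y"
    proof
      fix e show "Z e = Y e"
      proof (cases "Y e = Zer")
        case True
        then have "e \<notin> supp Y" by (simp add: supp_def)
        then have "e \<notin> supp Z" using eqs by simp
        then show ?thesis using True by (simp add: supp_def)
      next
        case False then show ?thesis using sle_eq[OF Z(2)] by simp
      qed
    qed
  qed
  then show ?thesis using Y(2) by blast
qed

lemma cell_surj:
  fixes V :: "('e::finite \<Rightarrow> real) set"
  assumes V: "lin_subspace V" and ci: "(F, G, T) \<in> cell_index V"
  shows "\<exists>S. (F, G, S) \<in> triples V \<and> restr (G - F) S = T"
proof -
  have FG: "F \<in> flats V" "G \<in> flats V" "F \<subseteq> G" using ci by (auto simp: cell_index_def)
  obtain x where x: "x \<in> V" "\<forall>e\<in>F. x e = 0" "T = restr G (signmap x)" "\<forall>e\<in>G - F. x e \<noteq> 0"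
    using cell_index_rep[OF V ci] by blast
  obtain g where g: "g \<in> V" "G = zer (signmap g)" using FG(2) by (auto simp: flats_def covectors_def)
  have Gg: "e \<in> G \<longleftrightarrow> g e = 0" for e using g(2) by (simp add: zer_signmap)
  have "eventually (\<lambda>t. g e \<noteq> 0 \<longrightarrow> sign_of (x e + t * g e + 0 / t) = sign_of (g e)) at_top" for e
  proof (cases "g e = 0")
    case True then show ?thesis by simp
  next
    case False
    show ?thesis by (rule eventually_mono[OF far[OF False, of 0 "x e" 0]]) simp
  qed
  then have "eventually (\<lambda>t. \<forall>e. g e \<noteq> 0 \<longrightarrow> sign_of (x e + t * g e + 0 / t) = sign_of (g e)) at_top"
    by (rule eventually_all_finite)
  then obtain t where t: "\<forall>e. g e \<noteq> 0 \<longrightarrow> sign_of (x e + t * g e + 0 / t) = sign_of (g e)"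
    using ev_ex by blast
  define a where "a = (\<lambda>e. x e + t * g e)"
  have aV: "a \<in> V" unfolding a_def by (rule lin_comb2[OF V x(1) g(1)])
  have ag: "g e \<noteq> 0 \<Longrightarrow> sign_of (a e) = sign_of (g e)" for e using t by (simp add: a_def)
  have aG: "g e = 0 \<Longrightarrow> a e = x e" for e by (simp add: a_def)
  have Acov: "signmap a \<in> covectors V" using aV by (simp add: covectors_def)
  obtain S where S: "S \<in> topes V" "sle (signmap a) S" using tope_exists[OF Acov] by blast
  have zA: "zer (signmap a) = F"
  proof -
    have "a e = 0 \<longleftrightarrow> e \<in> F" for e
    proof (cases "g e = 0")
      case True
      then have "e \<in> G" using Gg by simp
      show ?thesis
      proof (cases "e \<in> F")
        case True then show ?thesis using aG[OF \<open>g e = 0\<close>] x(2) by simp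
      next
        case False then show ?thesis using aG[OF \<open>g e = 0\<close>] x(4) \<open>e \<in> G\<close> by simp
      qed
    next
      case False
      then have "sign_of (a e) \<noteq> Zer" using ag[OF False] by (simp add: sign_of_simps)
      then have "a e \<noteq> 0" using sign_of_simps(3) by blast
      moreover have "e \<notin> F" using False FG(3) Gg by blast
      ultimately show ?thesis by simp
    qed
    then show ?thesis by (auto simp: zer_signmap)
  qed
  have ag': "\<forall>e. sign_of (g e) \<noteq> Zer \<longrightarrow> sign_of (a e) = sign_of (g e)"
    using ag by (simp add: sign_of_simps)
  have gA: "sle (signmap g) (signmap a)"
    unfolding sle_def pos_def neg_def signmap_apply
    using ag' by force
  have ra1: "rel_acyclic V F S" unfolding rel_acyclic_def using Acov S(2) zA by blast
  have gcov: "signmap g \<in> covectors V" using g(1) by (simp add: covectors_def)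
  have ra2: "rel_acyclic V G S" unfolding rel_acyclic_def
    using gcov sle_trans[OF gA S(2)] g(2) by blast
  have tr: "(F, G, S) \<in> triples V"
    unfolding triples_def using S(1) FG ra1 ra2 by simp
  have "restr (G - F) S = T"
  proof
    fix e show "restr (G - F) S e = T e"
    proof (cases "e \<in> G - F")
      case True
      then have g0: "g e = 0" using Gg by simp
      then have "a e = x e" by (rule aG)
      then have "signmap a e \<noteq> Zer" using x(4) True by (simp add: sign_of_simps)
      then have "S e = signmap a e" using sle_eq[OF S(2)] by blast
      then show ?thesis using True x(3) \<open>a e = x e\<close> by (simp add: restr_def)
    next
      case False
      have "restr (G - F) T = T" by (rule restr_T[OF V ci])
      then show ?thesis using False by (metis restr_apply)
    qed
  qed
  then show ?thesis using tr by blast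
qed

theorem lemma5p4:
  fixes V :: "('e::finite \<Rightarrow> real) set"
  assumes "lin_subspace V"
  shows "(\<exists>\<Phi>. bij_betw \<Phi> (triples V // sim V) (cell_index V) \<and>
            (\<forall>C\<in>triples V // sim V. \<forall>(I, J, S)\<in>C.
               (case \<Phi> C of (F, G, T) \<Rightarrow> cellY V F G T = cellSY V S I J)))
       \<and> (\<forall>(I, J, S)\<in>triples V. \<forall>(F, G, T)\<in>cell_index V.
            cellY V F G T = cellSY V S I J \<longleftrightarrow>
              (F, G) = (I, J) \<and> restr (G - F) S = restr (G - F) T)"
proof -
  note V = assms
  define key :: "'e set \<times> 'e set \<times> ('e \<Rightarrow> sgn) \<Rightarrow> 'e set \<times> 'e set \<times> ('e \<Rightarrow> sgn)"
    where "key = (\<lambda>(I, J, S). (I, J, restr (J - I) S))"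
  have sim_iff: "(x, y) \<in> sim V \<longleftrightarrow> x \<in> triples V \<and> y \<in> triples V \<and> key x = key y" for x y
  proof -
    obtain a b c where x: "x = (a, b, c)" by (cases x rule: prod_cases3)
    obtain a' b' c' where y: "y = (a', b', c')" by (cases y rule: prod_cases3)
    show ?thesis unfolding x y sim_def key_def by auto
  qed
  have cls: "sim V `` {x} = {y \<in> triples V. key y = key x}" if "x \<in> triples V" for x
    using that by (auto simp: sim_iff)
  have Qiff: "C \<in> triples V // sim V \<longleftrightarrow> (\<exists>x\<in>triples V. C = sim V `` {x})" for C
    by (auto simp: quotient_def)
  define \<Phi> where "\<Phi> = (\<lambda>C. key (SOME y. y \<in> C))"
  have Phicls: "\<Phi> (sim V `` {x}) = key x" if x: "x \<in> triples V" for x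
  proof -
    have "x \<in> sim V `` {x}" using x cls by auto
    then have "(SOME y. y \<in> sim V `` {x}) \<in> sim V `` {x}" by (rule someI)
    then show ?thesis unfolding \<Phi>_def using cls[OF x] by auto
  qed
  have keyci: "key x \<in> cell_index V" if x: "x \<in> triples V" for x
  proof -
    obtain a b c where xx: "x = (a, b, c)" by (cases x rule: prod_cases3)
    show ?thesis using triple_minor[OF V] x unfolding xx key_def by simp
  qed
  have bij: "bij_betw \<Phi> (triples V // sim V) (cell_index V)"
    unfolding bij_betw_def
  proof
    show "inj_on \<Phi> (triples V // sim V)"
    proof (rule inj_onI)
      fix C1 C2 assume C1: "C1 \<in> triples V // sim V" and C2: "C2 \<in> triples V // sim V"
        and eq: "\<Phi> C1 = \<Phi> C2"
      obtain x1 where x1: "x1 \<in> triples V" "C1 = sim V `` {x1}" using C1 Qiff by blast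
      obtain x2 where x2: "x2 \<in> triples V" "C2 = sim V `` {x2}" using C2 Qiff by blast
      have "key x1 = key x2" using eq Phicls x1 x2 by simp
      then show "C1 = C2" using cls x1 x2 by simp
    qed
    show "\<Phi> ` (triples V // sim V) = cell_index V"
    proof
      show "\<Phi> ` (triples V // sim V) \<subseteq> cell_index V"
      proof
        fix c assume "c \<in> \<Phi> ` (triples V // sim V)"
        then obtain C where C: "C \<in> triples V // sim V" "c = \<Phi> C" by blast
        obtain x where x: "x \<in> triples V" "C = sim V `` {x}" using C(1) Qiff by blast
        show "c \<in> cell_index V" using C(2) x Phicls keyci by simp
      qed
      show "cell_index V \<subseteq> \<Phi> ` (triples V // sim V)"
      proof
        fix c assume c: "c \<in> cell_index V"
        obtain F G T where cc: "c = (F, G, T)" by (cases c rule: prod_cases3)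
        obtain S where S: "(F, G, S) \<in> triples V" "restr (G - F) S = T"
          using cell_surj[OF V] c cc by blast
        have "\<Phi> (sim V `` {(F, G, S)}) = c" using Phicls[OF S(1)] S(2) cc by (simp add: key_def)
        moreover have "sim V `` {(F, G, S)} \<in> triples V // sim V" using Qiff S(1) by blast
        ultimately show "c \<in> \<Phi> ` (triples V // sim V)" by blast
      qed
    qed
  qed
  have cells: "\<forall>C\<in>triples V // sim V. \<forall>(I, J, S)\<in>C.
               (case \<Phi> C of (F, G, T) \<Rightarrow> cellY V F G T = cellSY V S I J)"
  proof (intro ballI)
    fix C y assume C: "C \<in> triples V // sim V" and y: "y \<in> C"
    obtain x where x: "x \<in> triples V" "C = sim V `` {x}" using C Qiff by blast
    obtain I J S where yy: "y = (I, J, S)" by (cases y rule: prod_cases3)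
    have yt: "(I, J, S) \<in> triples V" and ky: "key (I, J, S) = key x"
      using y x cls yy by auto
    have "\<Phi> C = (I, J, restr (J - I) S)" using Phicls[OF x(1)] x(2) ky by (simp add: key_def)
    then show "case y of (I, J, S) \<Rightarrow> (case \<Phi> C of (F, G, T) \<Rightarrow> cellY V F G T = cellSY V S I J)"
      using main_cell[OF V yt] yy by simp
  qed
  have part2: "\<forall>(I, J, S)\<in>triples V. \<forall>(F, G, T)\<in>cell_index V.
            cellY V F G T = cellSY V S I J \<longleftrightarrow>
              (F, G) = (I, J) \<and> restr (G - F) S = restr (G - F) T"
  proof (rule ballI)
    fix y assume y: "y \<in> triples V"
    obtain I J S where yy: "y = (I, J, S)" by (cases y rule: prod_cases3)
    have tr: "(I, J, S) \<in> triples V" using y yy by simp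
    have ci0: "(I, J, restr (J - I) S) \<in> cell_index V" by (rule triple_minor[OF V tr])
    have mc: "cellSY V S I J = cellY V I J (restr (J - I) S)" using main_cell[OF V tr] by simp
    have inner: "\<forall>(F, G, T)\<in>cell_index V. cellY V F G T = cellSY V S I J \<longleftrightarrow>
              (F, G) = (I, J) \<and> restr (G - F) S = restr (G - F) T"
    proof (rule ballI)
      fix c assume c: "c \<in> cell_index V"
      obtain F G T where cc: "c = (F, G, T)" by (cases c rule: prod_cases3)
      have ci: "(F, G, T) \<in> cell_index V" using c cc by simp
      have rT: "restr (G - F) T = T" by (rule restr_T[OF V ci])
      have "cellY V F G T = cellSY V S I J \<longleftrightarrow> (F, G) = (I, J) \<and> restr (G - F) S = restr (G - F) T"
      proof
        assume eq: "cellY V F G T = cellSY V S I J"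
        then have "cellY V F G T = cellY V I J (restr (J - I) S)" using mc by simp
        from cellY_inj[OF V ci ci0 this] have "F = I" "G = J" "T = restr (J - I) S" by auto
        then show "(F, G) = (I, J) \<and> restr (G - F) S = restr (G - F) T" using rT by simp
      next
        assume h: "(F, G) = (I, J) \<and> restr (G - F) S = restr (G - F) T"
        then have "F = I" "G = J" "T = restr (J - I) S" using rT by auto
        then show "cellY V F G T = cellSY V S I J" using mc by simp
      qed
      then show "case c of (F, G, T) \<Rightarrow> cellY V F G T = cellSY V S I J \<longleftrightarrow>
              (F, G) = (I, J) \<and> restr (G - F) S = restr (G - F) T" using cc by simp
    qed
    then show "case y of (I, J, S) \<Rightarrow> (\<forall>(F, G, T)\<in>cell_index V. cellY V F G T = cellSY V S I J \<longleftrightarrow>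
              (F, G) = (I, J) \<and> restr (G - F) S = restr (G - F) T)" using yy by simp
  qed
  show ?thesis using bij cells part2 by blast
qed

end
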